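(* Let $\langle \mathcal{B},\le_t,\le_k\rangle$ be a complete, infinitely distributive bilattice with negation satisfying the infinitary interlacing conditions, with $\mathcal U$ and $\mathcal O$ the bottom and top of $\le_k$. Let $I$ be an interpretation (a function from the Herbrand base to $\mathcal B$), let $B$ be a closed formula and $\alpha\in\mathcal B$. Then $B\equiv_I\alpha$ if and only if $I(B)=\alpha$ and $I_{\mathcal O}(B)=\alpha$.
   Context: In the bilattice, $\wedge,\vee$ denote meet and join for $\le_t$ and $\otimes,\oplus$ meet and join for $\le_k$; $\bigwedge,\bigvee,\bigotimes,\bigoplus$ are the infinitary versions. Infinitely distributive means all finitary and infinitary distributive laws connecting $\wedge,\vee,\otimes,\oplus$ hold; the infinitary interlacing conditions mean each of these finitary and infinitary meets and joins is monotone with respect to both orderings. A closed formula is built from ground literals (ground atoms $A$ and negated ground atoms $\neg A$) and elements of $\mathcal B$ using $\wedge,\vee,\otimes,\oplus$ and quantifiers $\exists,\forall$ ranging over closed terms. An interpretation $I$ is extended to closed formulas by $I(\neg A)=\neg I(A)$, $I(X\wedge Y)=I(X)\wedge I(Y)$ (similarly for $\vee,\otimes,\oplus$), $I(v)=v$ for $v\in\mathcal B$, $I(\exists x\,\phi(x))=\bigvee_{t} I(\phi(t))$ and $I(\forall x\,\phi(x))=\bigwedge_t I(\phi(t))$, $t$ ranging over closed terms. For interpretations $I,J$, write $I\le J$ ("$I$ is a part of $J$") if for every ground atom $A$, $I(A)\neq\mathcal U$ implies $I(A)=J(A)$. For a closed formula $B$, $B\equiv_I\alpha$ means $J(B)=\alpha$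 for every interpretation $J$ with $I\le J$. $I_{\mathcal O}$ is the interpretation with $I_{\mathcal O}(A)=I(A)$ if $I(A)\neq\mathcal U$ and $I_{\mathcal O}(A)=\mathcal O$ otherwise. *)

theory Defs
  imports Main
begin

definition is_lub :: "('b \<Rightarrow> 'b \<Rightarrow> bool) \<Rightarrow> 'b set \<Rightarrow> 'b \<Rightarrow> bool" where
  "is_lub le S x \<longleftrightarrow> (\<forall>y\<in>S. le y x) \<and> (\<forall>z. (\<forall>y\<in>S. le y z) \<longrightarrow> le x z)"

definition is_glb :: "('b \<Rightarrow> 'b \<Rightarrow> bool) \<Rightarrow> 'b set \<Rightarrow> 'b \<Rightarrow> bool" where
  "is_glb le S x \<longleftrightarrow> (\<forall>y\<in>S. le x y) \<and> (\<forall>z. (\<forall>y\<in>S. le z y) \<longrightarrow> le z x)"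

definition lub :: "('b \<Rightarrow> 'b \<Rightarrow> bool) \<Rightarrow> 'b set \<Rightarrow> 'b" where
  "lub le S = (THE x. is_lub le S x)"

definition glb :: "('b \<Rightarrow> 'b \<Rightarrow> bool) \<Rightarrow> 'b set \<Rightarrow> 'b" where
  "glb le S = (THE x. is_glb le S x)"

definition partial_order_rel :: "('b \<Rightarrow> 'b \<Rightarrow> bool) \<Rightarrow> bool" where
  "partial_order_rel le \<longleftrightarrow> (\<forall>x. le x x) \<and> (\<forall>x y. le x y \<and> le y x \<longrightarrow> x = y)
     \<and> (\<forall>x y z. le x y \<and> le y z \<longrightarrow> le x z)"

definition complete_rel :: "('b \<Rightarrow> 'b \<Rightarrow> bool) \<Rightarrow> bool" where
  "complete_rel le \<longleftrightarrow> (\<forall>S. (\<exists>x. is_lub le S x) \<and> (\<exists>x. is_glb le S x))"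

text \<open>The four (finitary and infinitary) operations, indexed by i < 4:
  0: meet for le_t (\<and>, big \<And>), 1: join for le_t (\<or>, big \<Or>),
  2: meet for le_k (\<otimes>), 3: join for le_k (\<oplus>).\<close>

definition bop :: "('b \<Rightarrow> 'b \<Rightarrow> bool) \<Rightarrow> ('b \<Rightarrow> 'b \<Rightarrow> bool) \<Rightarrow> nat \<Rightarrow> 'b set \<Rightarrow> 'b" where
  "bop tle kle i S = (if i = 0 then glb tle S else if i = 1 then lub tle S
                      else if i = 2 then glb kle S else lub kle S)"

abbreviation tand where "tand tle a b \<equiv> glb tle {a, b}"
abbreviation tor  where "tor tle a b \<equiv> lub tle {a, b}"

definition complete_bilattice_neg ::
  "('b \<Rightarrow> 'b \<Rightarrow> bool) \<Rightarrow> ('b \<Rightarrow> 'b \<Rightarrow> bool) \<Rightarrow> ('b \<Rightarrow> 'b) \<Rightarrow> bool" where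
  "complete_bilattice_neg tle kle neg \<longleftrightarrow>
     partial_order_rel tle \<and> partial_order_rel kle \<and> complete_rel tle \<and> complete_rel kle \<and>
     (\<forall>x y. tle x y \<longrightarrow> tle (neg y) (neg x)) \<and>
     (\<forall>x y. kle x y \<longrightarrow> kle (neg x) (neg y)) \<and>
     (\<forall>x. neg (neg x) = x)"

definition infinitely_distributive ::
  "('b \<Rightarrow> 'b \<Rightarrow> bool) \<Rightarrow> ('b \<Rightarrow> 'b \<Rightarrow> bool) \<Rightarrow> bool" where
  "infinitely_distributive tle kle \<longleftrightarrow>
     (\<forall>i<4. \<forall>j<4. i \<noteq> j \<longrightarrow>
        (\<forall>a b c. bop tle kle i {a, bop tle kle j {b, c}}
                 = bop tle kle j {bop tle kle i {a, b}, bop tle kle i {a, c}}) \<and>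
        (\<forall>a S. S \<noteq> {} \<longrightarrow> bop tle kle i {a, bop tle kle j S}
                 = bop tle kle j ((\<lambda>s. bop tle kle i {a, s}) ` S)))"

text \<open>Infinitary monotonicity is stated for families
  f, g indexed by an index set Ix (index type 'b \<times> 'b, large enough for all families
  of elements of the carrier).\<close>

definition infinitely_interlaced ::
  "('b \<Rightarrow> 'b \<Rightarrow> bool) \<Rightarrow> ('b \<Rightarrow> 'b \<Rightarrow> bool) \<Rightarrow> bool" where
  "infinitely_interlaced tle kle \<longleftrightarrow>
     (\<forall>i<4. \<forall>le \<in> {tle, kle}.
        (\<forall>a b c. le a b \<longrightarrow> le (bop tle kle i {a, c}) (bop tle kle i {b, c})) \<and>
        (\<forall>(Ix :: ('b \<times> 'b) set) f g. (\<forall>x\<in>Ix. le (f x) (g x)) \<longrightarrow>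
             le (bop tle kle i (f ` Ix)) (bop tle kle i (g ` Ix))))"

definition kbot :: "('b \<Rightarrow> 'b \<Rightarrow> bool) \<Rightarrow> 'b" where "kbot kle = glb kle UNIV"
definition ktop :: "('b \<Rightarrow> 'b \<Rightarrow> bool) \<Rightarrow> 'b" where "ktop kle = lub kle UNIV"

text \<open>'a is the Herbrand base (ground atoms), 't the set of closed terms, 'b the bilattice.
  Quantified formulas are represented by their instance map t \<mapsto> \<phi>(t).\<close>

datatype ('a, 't, 'b) cform =
    Atom 'a
  | NegAtom 'a
  | Val 'b
  | TAnd "('a, 't, 'b) cform" "('a, 't, 'b) cform"
  | TOr "('a, 't, 'b) cform" "('a, 't, 'b) cform"
  | KAnd "('a, 't, 'b) cform" "('a, 't, 'b) cform"
  | KOr "('a, 't, 'b) cform" "('a, 't, 'b) cform"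
  | Exists "'t \<Rightarrow> ('a, 't, 'b) cform"
  | Forall "'t \<Rightarrow> ('a, 't, 'b) cform"

primrec eval :: "('b \<Rightarrow> 'b \<Rightarrow> bool) \<Rightarrow> ('b \<Rightarrow> 'b \<Rightarrow> bool) \<Rightarrow> ('b \<Rightarrow> 'b) \<Rightarrow> ('a \<Rightarrow> 'b)
                 \<Rightarrow> ('a, 't, 'b) cform \<Rightarrow> 'b" where
  "eval tle kle neg I (Atom A) = I A"
| "eval tle kle neg I (NegAtom A) = neg (I A)"
| "eval tle kle neg I (Val v) = v"
| "eval tle kle neg I (TAnd X Y) = glb tle {eval tle kle neg I X, eval tle kle neg I Y}"
| "eval tle kle neg I (TOr X Y) = lub tle {eval tle kle neg I X, eval tle kle neg I Y}"
| "eval tle kle neg I (KAnd X Y) = glb kle {eval tle kle neg I X, eval tle kle neg I Y}"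
| "eval tle kle neg I (KOr X Y) = lub kle {eval tle kle neg I X, eval tle kle neg I Y}"
| "eval tle kle neg I (Exists \<phi>) = lub tle (range (\<lambda>t. eval tle kle neg I (\<phi> t)))"
| "eval tle kle neg I (Forall \<phi>) = glb tle (range (\<lambda>t. eval tle kle neg I (\<phi> t)))"

definition part_of :: "('b \<Rightarrow> 'b \<Rightarrow> bool) \<Rightarrow> ('a \<Rightarrow> 'b) \<Rightarrow> ('a \<Rightarrow> 'b) \<Rightarrow> bool" where
  "part_of kle I J \<longleftrightarrow> (\<forall>A. I A \<noteq> kbot kle \<longrightarrow> I A = J A)"

definition equiv_I ::
  "('b \<Rightarrow> 'b \<Rightarrow> bool) \<Rightarrow> ('b \<Rightarrow> 'b \<Rightarrow> bool) \<Rightarrow> ('b \<Rightarrow> 'b) \<Rightarrow> ('a \<Rightarrow> 'b)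
     \<Rightarrow> ('a, 't, 'b) cform \<Rightarrow> 'b \<Rightarrow> bool" where
  "equiv_I tle kle neg I B \<alpha> \<longleftrightarrow> (\<forall>J. part_of kle I J \<longrightarrow> eval tle kle neg J B = \<alpha>)"

definition interp_O :: "('b \<Rightarrow> 'b \<Rightarrow> bool) \<Rightarrow> ('a \<Rightarrow> 'b) \<Rightarrow> 'a \<Rightarrow> 'b" where
  "interp_O kle I A = (if I A \<noteq> kbot kle then I A else ktop kle)"

end

theory Submission
  imports Defs
begin

lemma glb_is:
  assumes "partial_order_rel le" "complete_rel le"
  shows "is_glb le S (glb le S)"
proof -
  obtain x where x: "is_glb le S x" using assms(2) unfolding complete_rel_def by blast
  have "\<And>y. is_glb le S y \<Longrightarrow> y = x" using x assms(1)
    unfolding is_glb_def partial_order_rel_def by blast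
  then show ?thesis unfolding glb_def by (rule theI[of "is_glb le S", OF x])
qed

lemma lub_is:
  assumes "partial_order_rel le" "complete_rel le"
  shows "is_lub le S (lub le S)"
proof -
  obtain x where x: "is_lub le S x" using assms(2) unfolding complete_rel_def by blast
  have "\<And>y. is_lub le S y \<Longrightarrow> y = x" using x assms(1)
    unfolding is_lub_def partial_order_rel_def by blast
  then show ?thesis unfolding lub_def by (rule theI[of "is_lub le S", OF x])
qed

lemma bin_mono:
  fixes kle :: "'b \<Rightarrow> 'b \<Rightarrow> bool" and opr :: "'b set \<Rightarrow> 'b"
  assumes po: "partial_order_rel kle"
    and m: "\<And>a b c. kle a b \<Longrightarrow> kle (opr {a, c}) (opr {b, c})"
    and ab: "kle a b" and cd: "kle c d"
  shows "kle (opr {a, c}) (opr {b, d})"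
proof -
  have 1: "kle (opr {a, c}) (opr {b, c})" by (rule m[OF ab])
  have "kle (opr {c, b}) (opr {d, b})" by (rule m[OF cd])
  moreover have "{c, b} = {b, c}" "{d, b} = {b, d}" by (rule insert_commute)+
  ultimately have 2: "kle (opr {b, c}) (opr {b, d})" by simp
  have tr: "\<forall>x y z. kle x y \<and> kle y z \<longrightarrow> kle x z" using po unfolding partial_order_rel_def by (elim conjE)
  show ?thesis by (rule tr[rule_format, OF conjI[OF 1 2]])
qed

lemma inf_mono:
  fixes kle :: "'b \<Rightarrow> 'b \<Rightarrow> bool" and F G :: "'t \<Rightarrow> 'b" and op :: "'b set \<Rightarrow> 'b"
  assumes m: "\<And>(Ix :: ('b \<times> 'b) set) f g. (\<And>x. x \<in> Ix \<Longrightarrow> kle (f x) (g x)) \<Longrightarrow>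
             kle (op (f ` Ix)) (op (g ` Ix))"
    and h: "\<And>t. kle (F t) (G t)"
  shows "kle (op (range F)) (op (range G))"
proof -
  let ?P = "range (\<lambda>t. (F t, G t))"
  have "kle (op (fst ` ?P)) (op (snd ` ?P))"
  proof (rule m)
    fix x assume "x \<in> ?P"
    then obtain t where "x = (F t, G t)" by blast
    then show "kle (fst x) (snd x)" using h by simp
  qed
  moreover have "fst ` ?P = range F" "snd ` ?P = range G" by (auto simp: image_image)
  ultimately show ?thesis by simp
qed

lemma eval_mono:
  fixes tle kle :: "'b \<Rightarrow> 'b \<Rightarrow> bool" and neg :: "'b \<Rightarrow> 'b" and J J' :: "'a \<Rightarrow> 'b"
    and B :: "('a, 't, 'b) cform"
  assumes bl: "complete_bilattice_neg tle kle neg"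
    and il: "infinitely_interlaced tle kle"
    and JJ: "\<And>A. kle (J A) (J' A)"
  shows "kle (eval tle kle neg J B) (eval tle kle neg J' B)"
proof -
  have po: "partial_order_rel kle" using bl unfolding complete_bilattice_neg_def by blast
  have ng: "\<And>x y. kle x y \<Longrightarrow> kle (neg x) (neg y)" using bl unfolding complete_bilattice_neg_def by blast
  have IL: "\<And>i. i < 4 \<Longrightarrow> (\<forall>a b c. kle a b \<longrightarrow> kle (bop tle kle i {a, c}) (bop tle kle i {b, c})) \<and>
        (\<forall>(Ix :: ('b \<times> 'b) set) f g. (\<forall>x\<in>Ix. kle (f x) (g x)) \<longrightarrow>
             kle (bop tle kle i (f ` Ix)) (bop tle kle i (g ` Ix)))"
  proof -
    fix i :: nat assume i4: "i < 4"
    have H: "\<forall>i<4. \<forall>le \<in> {tle, kle}.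
        (\<forall>a b c. le a b \<longrightarrow> le (bop tle kle i {a, c}) (bop tle kle i {b, c})) \<and>
        (\<forall>(Ix :: ('b \<times> 'b) set) f g. (\<forall>x\<in>Ix. le (f x) (g x)) \<longrightarrow>
             le (bop tle kle i (f ` Ix)) (bop tle kle i (g ` Ix)))"
      using il by (simp only: infinitely_interlaced_def)
    have km: "kle \<in> {tle, kle}" by (rule insertI2[OF insertI1])
    show "?thesis i" by (rule H[rule_format, OF i4 km])
  qed
  have I0a: "\<And>a b c. kle a b \<Longrightarrow> kle (glb tle {a, c}) (glb tle {b, c})"
  proof -
    fix a b c assume "kle a b"
    moreover have "bop tle kle 0 = glb tle" by (rule ext) (simp add: bop_def)
    ultimately show "kle (glb tle {a, c}) (glb tle {b, c})" using IL[of 0] by simp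
  qed
  have I0b: "\<And>(Ix :: ('b \<times> 'b) set) f g. (\<And>x. x \<in> Ix \<Longrightarrow> kle (f x) (g x)) \<Longrightarrow> kle (glb tle (f ` Ix)) (glb tle (g ` Ix))"
  proof -
    fix Ix :: "('b \<times> 'b) set" and f g assume "\<And>x. x \<in> Ix \<Longrightarrow> kle (f x) (g x)"
    then have "\<forall>x\<in>Ix. kle (f x) (g x)" by blast
    moreover have "bop tle kle 0 = glb tle" by (rule ext) (simp add: bop_def)
    ultimately show "kle (glb tle (f ` Ix)) (glb tle (g ` Ix))" using IL[of 0] by simp
  qed
  have I1a: "\<And>a b c. kle a b \<Longrightarrow> kle (lub tle {a, c}) (lub tle {b, c})"
  proof -
    fix a b c assume "kle a b"
    moreover have "bop tle kle 1 = lub tle" by (rule ext) (simp add: bop_def)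
    ultimately show "kle (lub tle {a, c}) (lub tle {b, c})" using IL[of 1] by simp
  qed
  have I1b: "\<And>(Ix :: ('b \<times> 'b) set) f g. (\<And>x. x \<in> Ix \<Longrightarrow> kle (f x) (g x)) \<Longrightarrow> kle (lub tle (f ` Ix)) (lub tle (g ` Ix))"
  proof -
    fix Ix :: "('b \<times> 'b) set" and f g assume "\<And>x. x \<in> Ix \<Longrightarrow> kle (f x) (g x)"
    then have "\<forall>x\<in>Ix. kle (f x) (g x)" by blast
    moreover have "bop tle kle 1 = lub tle" by (rule ext) (simp add: bop_def)
    ultimately show "kle (lub tle (f ` Ix)) (lub tle (g ` Ix))" using IL[of 1] by simp
  qed
  have I2a: "\<And>a b c. kle a b \<Longrightarrow> kle (glb kle {a, c}) (glb kle {b, c})"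
  proof -
    fix a b c assume "kle a b"
    moreover have "bop tle kle 2 = glb kle" by (rule ext) (simp add: bop_def)
    ultimately show "kle (glb kle {a, c}) (glb kle {b, c})" using IL[of 2] by simp
  qed
  have I3a: "\<And>a b c. kle a b \<Longrightarrow> kle (lub kle {a, c}) (lub kle {b, c})"
  proof -
    fix a b c assume "kle a b"
    moreover have "bop tle kle 3 = lub kle" by (rule ext) (simp add: bop_def)
    ultimately show "kle (lub kle {a, c}) (lub kle {b, c})" using IL[of 3] by simp
  qed
  show ?thesis
  proof (induction B)
    case (Atom x) show ?case unfolding eval.simps by (rule JJ)
  next
    case (NegAtom x) show ?case unfolding eval.simps by (rule ng, rule JJ)
  next
    case (Val x)
    have "\<forall>x. kle x x" using po unfolding partial_order_rel_def by (rule conjunct1)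
    then show ?case unfolding eval.simps by (rule spec)
  next
    case (TAnd B1 B2) show ?case unfolding eval.simps by (rule bin_mono[where opr="glb tle"]) (rule po, erule I0a, rule TAnd.IH(1), rule TAnd.IH(2))
  next
    case (TOr B1 B2) show ?case unfolding eval.simps by (rule bin_mono[where opr="lub tle"]) (rule po, erule I1a, rule TOr.IH(1), rule TOr.IH(2))
  next
    case (KAnd B1 B2) show ?case unfolding eval.simps by (rule bin_mono[where opr="glb kle"]) (rule po, erule I2a, rule KAnd.IH(1), rule KAnd.IH(2))
  next
    case (KOr B1 B2) show ?case unfolding eval.simps by (rule bin_mono[where opr="lub kle"]) (rule po, erule I3a, rule KOr.IH(1), rule KOr.IH(2))
  next
    case (Exists x) show ?case unfolding eval.simps
      by (rule inf_mono[of kle "lub tle", OF I1b]) (assumption, rule Exists.IH, rule rangeI)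
  next
    case (Forall x) show ?case unfolding eval.simps
      by (rule inf_mono[of kle "glb tle", OF I0b]) (assumption, rule Forall.IH, rule rangeI)
  qed
qed

theorem lemma1:
  fixes tle kle :: "'b \<Rightarrow> 'b \<Rightarrow> bool" and neg :: "'b \<Rightarrow> 'b"
    and I :: "'a \<Rightarrow> 'b" and B :: "('a, 't, 'b) cform" and \<alpha> :: 'b
  assumes "complete_bilattice_neg tle kle neg"
    and "infinitely_distributive tle kle"
    and "infinitely_interlaced tle kle"
  shows "equiv_I tle kle neg I B \<alpha> \<longleftrightarrow>
           (eval tle kle neg I B = \<alpha> \<and> eval tle kle neg (interp_O kle I) B = \<alpha>)"
proof
  assume "equiv_I tle kle neg I B \<alpha>"
  moreover have "part_of kle I I" by (simp add: part_of_def)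
  moreover have "part_of kle I (interp_O kle I)" by (simp add: part_of_def interp_O_def)
  ultimately show "eval tle kle neg I B = \<alpha> \<and> eval tle kle neg (interp_O kle I) B = \<alpha>"
    unfolding equiv_I_def by blast
next
  assume h: "eval tle kle neg I B = \<alpha> \<and> eval tle kle neg (interp_O kle I) B = \<alpha>"
  have po: "partial_order_rel kle" and cr: "complete_rel kle"
    using assms(1) unfolding complete_bilattice_neg_def by blast+
  have bot: "\<And>x. kle (kbot kle) x" using glb_is[OF po cr, of UNIV]
    unfolding kbot_def is_glb_def by blast
  have top: "\<And>x. kle x (ktop kle)" using lub_is[OF po cr, of UNIV]
    unfolding ktop_def is_lub_def by blast
  have refl: "\<And>x. kle x x" using po unfolding partial_order_rel_def by blast
  show "equiv_I tle kle neg I B \<alpha>"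
    unfolding equiv_I_def
  proof (intro allI impI)
    fix J assume p: "part_of kle I J"
    have 1: "kle (I A) (J A)" for A
    proof (cases "I A = kbot kle")
      case True then show ?thesis using bot by simp
    next
      case False then show ?thesis using p refl unfolding part_of_def by simp
    qed
    have 2: "kle (J A) (interp_O kle I A)" for A
    proof (cases "I A = kbot kle")
      case True then show ?thesis using top by (simp add: interp_O_def)
    next
      case False then show ?thesis using p refl unfolding part_of_def interp_O_def by simp
    qed
    have "kle (eval tle kle neg I B) (eval tle kle neg J B)" by (rule eval_mono[OF assms(1,3)]) (rule 1)
    then have "kle \<alpha> (eval tle kle neg J B)" using h by simp
    moreover have "kle (eval tle kle neg J B) (eval tle kle neg (interp_O kle I) B)" by (rule eval_mono[OF assms(1,3)]) (rule 2)
    then have "kle (eval tle kle neg J B) \<alpha>" using h by simp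
    ultimately show "eval tle kle neg J B = \<alpha>" using po unfolding partial_order_rel_def by blast
  qed
qed

end
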